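(* Let $P\in I(\mathcal{S})$ be defined by $P(\sigma,\pi)=\binom{\pi}{\sigma}$. For all $\sigma,\pi\in\mathcal{S}$ and every integer $d$ (for $d<0$, $P^d=(P^{-1})^{-d}$; $P^0=\delta$), $$P^d(\sigma,\pi)=d^{|\pi|-|\sigma|}P(\sigma,\pi),$$ with the convention $0^0=1$.
   Context: $\mathcal{S}=\bigcup_{n\ge0}\mathcal{S}_n$ where $\mathcal{S}_n$ is the set of permutations of $[n]$ written as words; $|\pi|$ is the length. For $\sigma\in\mathcal{S}_k$, $\pi\in\mathcal{S}_n$, $\binom{\pi}{\sigma}$ is the number of order-preserving injections $\varphi:[k]\to[n]$ such that $\pi(\varphi(1))\cdots\pi(\varphi(k))$ is order-isomorphic to $\sigma$ (i.e. $\pi(\varphi(i))<\pi(\varphi(j))\iff\sigma(i)<\sigma(j)$). $\mathcal{S}$ is ordered by $\sigma\le\pi$ iff $\binom{\pi}{\sigma}>0$. $I(\mathcal{S})$ is its incidence algebra over $\mathbb{Q}$ with convolution $(FG)(x,y)=\sum_{x\le z\le y}F(x,z)G(z,y)$ and identity $\delta(x,y)=[x=y]$. *)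

theory Defs
  imports Complex_Main
begin

definition is_perm :: "nat list \<Rightarrow> bool" where
  "is_perm xs \<longleftrightarrow> distinct xs \<and> set xs = {1..length xs}"

definition order_iso :: "nat list \<Rightarrow> nat list \<Rightarrow> bool" where
  "order_iso xs ys \<longleftrightarrow> length xs = length ys \<and>
     (\<forall>i<length xs. \<forall>j<length xs. (xs ! i < xs ! j) \<longleftrightarrow> (ys ! i < ys ! j))"

text \<open>binom w v (binom pi sigma): number of order-preserving injections [k] -> [n],
  i.e. k-element sets of positions of w (read in increasing order),
  whose subword is order-isomorphic to v.\<close>
definition pcount :: "nat list \<Rightarrow> nat list \<Rightarrow> nat" where
  "pcount w v = card {I. I \<subseteq> {0..<length w} \<and> card I = length v
                              \<and> order_iso (nths w I) v}"

definition perm_le :: "nat list \<Rightarrow> nat list \<Rightarrow> bool" where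
  "perm_le v w \<longleftrightarrow> is_perm v \<and> is_perm w \<and> pcount w v > 0"

definition incidence_elem :: "(nat list \<Rightarrow> nat list \<Rightarrow> rat) \<Rightarrow> bool" where
  "incidence_elem F \<longleftrightarrow> (\<forall>x y. \<not> perm_le x y \<longrightarrow> F x y = 0)"

definition conv :: "(nat list \<Rightarrow> nat list \<Rightarrow> rat) \<Rightarrow> (nat list \<Rightarrow> nat list \<Rightarrow> rat)
                     \<Rightarrow> nat list \<Rightarrow> nat list \<Rightarrow> rat" where
  "conv F G x y = (\<Sum>z\<in>{z. perm_le x z \<and> perm_le z y}. F x z * G z y)"

definition delta :: "nat list \<Rightarrow> nat list \<Rightarrow> rat" where
  "delta x y = (if is_perm x \<and> x = y then 1 else 0)"

fun conv_pow :: "(nat list \<Rightarrow> nat list \<Rightarrow> rat) \<Rightarrow> nat \<Rightarrow> nat list \<Rightarrow> nat list \<Rightarrow> rat" where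
  "conv_pow F 0 = delta"
| "conv_pow F (Suc n) = conv F (conv_pow F n)"

definition conv_inv :: "(nat list \<Rightarrow> nat list \<Rightarrow> rat) \<Rightarrow> nat list \<Rightarrow> nat list \<Rightarrow> rat" where
  "conv_inv F = (THE G. incidence_elem G \<and> conv F G = delta \<and> conv G F = delta)"

definition conv_ipow :: "(nat list \<Rightarrow> nat list \<Rightarrow> rat) \<Rightarrow> int \<Rightarrow> nat list \<Rightarrow> nat list \<Rightarrow> rat" where
  "conv_ipow F d = (if 0 \<le> d then conv_pow F (nat d) else conv_pow (conv_inv F) (nat (- d)))"

definition Pmat :: "nat list \<Rightarrow> nat list \<Rightarrow> rat" where
  "Pmat v w = (if is_perm v \<and> is_perm w then of_nat (pcount w v) else 0)"

end

theory Submission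
  imports Defs
begin


lemma order_iso_refl: "order_iso xs xs" by (simp add: order_iso_def)
lemma order_iso_sym: "order_iso xs ys \<Longrightarrow> order_iso ys xs" by (simp add: order_iso_def)
lemma order_iso_trans: "order_iso xs ys \<Longrightarrow> order_iso ys zs \<Longrightarrow> order_iso xs zs"
  by (simp add: order_iso_def)

lemma order_iso_zip:
  assumes "length xs = length ys"
  shows "order_iso xs ys \<longleftrightarrow> (\<forall>(a,b)\<in>set (zip xs ys). \<forall>(c,d)\<in>set(zip xs ys). a < c \<longleftrightarrow> b < d)"
  using assms by (auto simp: order_iso_def set_zip; metis)

lemma zip_nths: "length xs = length ys \<Longrightarrow> zip (nths xs I) (nths ys I) = nths (zip xs ys) I"
proof (induction xs arbitrary: ys I)
  case Nil then show ?case by simp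
next
  case (Cons x xs)
  then obtain y ys' where "ys = y # ys'" by (cases ys) auto
  with Cons show ?case by (auto simp: nths_Cons)
qed

lemma order_iso_nths: "order_iso xs ys \<Longrightarrow> order_iso (nths xs I) (nths ys I)"
proof -
  assume a: "order_iso xs ys"
  hence l: "length xs = length ys" by (simp add: order_iso_def)
  hence l2: "length (nths xs I) = length (nths ys I)" by (simp add: length_nths)
  have "set (zip (nths xs I) (nths ys I)) \<subseteq> set (zip xs ys)"
    using zip_nths[OF l] set_nths_subset by metis
  thus ?thesis using a order_iso_zip[OF l] order_iso_zip[OF l2] by blast
qed



lemma perm_rank:
  assumes p: "is_perm p" and i: "i < length p"
  shows "card {j. j < length p \<and> p!j \<le> p!i} = p!i"
proof -
  have d: "distinct p" and s: "set p = {1..length p}" using p by (auto simp: is_perm_def)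
  have inj: "inj_on (\<lambda>j. p!j) {j. j < length p \<and> p!j \<le> p!i}"
    using d by (auto simp: inj_on_def nth_eq_iff_index_eq)
  have "(\<lambda>j. p!j) ` {j. j < length p \<and> p!j \<le> p!i} = {v \<in> set p. v \<le> p!i}"
    by (auto simp: in_set_conv_nth)
  also have "\<dots> = {1..p!i}" using s i nth_mem[OF i] by auto
  finally show ?thesis using card_image[OF inj] by simp
qed

lemma perm_iso_eq:
  assumes p: "is_perm p" and q: "is_perm q" and o: "order_iso p q"
  shows "p = q"
proof (rule nth_equalityI)
  show l: "length p = length q" using o by (simp add: order_iso_def)
  fix i assume i: "i < length p"
  have "{j. j < length p \<and> p!j \<le> p!i} = {j. j < length q \<and> q!j \<le> q!i}"
    using o i l by (auto simp: order_iso_def not_less[symmetric])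
  thus "p!i = q!i" using perm_rank[OF p i] perm_rank[OF q, of i] i l by simp
qed



definition std :: "nat list \<Rightarrow> nat list" where
  "std xs = map (\<lambda>x. card {y \<in> set xs. y \<le> x}) xs"

lemma length_std[simp]: "length (std xs) = length xs" by (simp add: std_def)

lemma rank_strict:
  assumes "finite A" "x \<in> A" "y \<in> A" "(x::nat) < y"
  shows "card {z \<in> A. z \<le> x} < card {z \<in> A. z \<le> y}"
proof (rule psubset_card_mono)
  show "finite {z \<in> A. z \<le> y}" using assms by auto
  have "y \<in> {z \<in> A. z \<le> y}" "y \<notin> {z \<in> A. z \<le> x}" using assms by auto
  then show "{z \<in> A. z \<le> x} \<subset> {z \<in> A. z \<le> y}"
    apply (intro psubsetI)
    using assms apply auto[1]
    by blast
qed

lemma rank_iff: "finite A \<Longrightarrow> x \<in> A \<Longrightarrow> y \<in> A \<Longrightarrow>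
   card {z \<in> A. z \<le> x} < card {z \<in> A. z \<le> y} \<longleftrightarrow> (x::nat) < y"
proof -
  assume a: "finite A" "x \<in> A" "y \<in> A"
  show ?thesis
  proof (cases x y rule: linorder_cases)
    case less then show ?thesis using rank_strict[OF a less] by simp
  next
    case equal then show ?thesis by simp
  next
    case greater then show ?thesis using rank_strict[OF a(1,3,2) greater] by simp
  qed
qed

lemma order_iso_std: "order_iso xs (std xs)"
  by (simp add: order_iso_def std_def rank_iff[OF finite_set])



lemma is_perm_std: assumes d: "distinct xs" shows "is_perm (std xs)"
proof -
  let ?r = "\<lambda>x. card {y \<in> set xs. y \<le> x}"
  have inj: "inj_on ?r (set xs)"
  proof (rule inj_onI)
    fix x y assume xy: "x \<in> set xs" "y \<in> set xs" "?r x = ?r y"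
    show "x = y"
    proof (rule ccontr)
      assume "x \<noteq> y"
      then consider "x < y" | "y < x" by linarith
      then show False using rank_strict[OF finite_set, of x xs y] rank_strict[OF finite_set, of y xs x] xy by cases auto
    qed
  qed
  have sub: "?r ` set xs \<subseteq> {1..length xs}"
  proof
    fix v assume "v \<in> ?r ` set xs"
    then obtain x where x: "x \<in> set xs" "v = ?r x" by auto
    have "x \<in> {y \<in> set xs. y \<le> x}" using x by auto
    hence "v > 0" using x by (subst x(2), subst card_gt_0_iff) auto
    moreover have "v \<le> card (set xs)" using x by (auto intro: card_mono)
    ultimately show "v \<in> {1..length xs}" using distinct_card[OF d] by auto
  qed
  have c: "card (?r ` set xs) = length xs" using card_image[OF inj] distinct_card[OF d] by simp
  have eq: "?r ` set xs = {1..length xs}"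
    by (rule card_subset_eq) (use sub c in auto)
  have "distinct (map ?r xs)" using d inj by (simp only: distinct_map) 
  moreover have "set (map ?r xs) = {1..length xs}" using eq by (simp only: set_map)
  ultimately show ?thesis unfolding is_perm_def std_def length_map by blast
qed

lemma iso_perm_unique: "distinct xs \<Longrightarrow> is_perm z \<Longrightarrow> order_iso xs z \<Longrightarrow> z = std xs"
  using perm_iso_eq[OF is_perm_std _ order_iso_trans[OF order_iso_sym[OF order_iso_std]]] by metis




lemma binom_Pow:
  fixes a b :: rat
  assumes "finite S"
  shows "(\<Sum>K\<in>Pow S. a ^ card K * b ^ (card S - card K)) = (a + b) ^ card S"
  using assms
proof (induction S rule: finite_induct)
  case empty then show ?case by simp
next
  case (insert x F)
  have inj: "inj_on (insert x) (Pow F)"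
    using insert.hyps(2) by (auto simp: inj_on_def)
  have disj: "Pow F \<inter> insert x ` Pow F = {}" using insert.hyps(2) by auto
  have cK: "\<And>K. K \<in> Pow F \<Longrightarrow> card K \<le> card F"
    using insert.hyps(1) by (auto intro: card_mono)
  have fK: "\<And>K. K \<in> Pow F \<Longrightarrow> finite K" using insert.hyps(1) by (auto intro: finite_subset)
  have xK: "\<And>K. K \<in> Pow F \<Longrightarrow> x \<notin> K" using insert.hyps(2) by auto
  let ?f = "\<lambda>K. a ^ card K * b ^ (card (insert x F) - card K)"
  have "(\<Sum>K\<in>Pow (insert x F). ?f K) = (\<Sum>K\<in>Pow F. ?f K) + (\<Sum>K\<in>insert x ` Pow F. ?f K)"
    unfolding Pow_insert using insert.hyps(1) disj by (simp add: sum.union_disjoint)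
  also have "(\<Sum>K\<in>Pow F. ?f K) = (\<Sum>K\<in>Pow F. b * (a ^ card K * b ^ (card F - card K)))"
    by (rule sum.cong) (auto simp: insert.hyps Suc_diff_le cK)
  also have "(\<Sum>K\<in>insert x ` Pow F. ?f K) = (\<Sum>K\<in>Pow F. ?f (insert x K))"
    using sum.reindex[OF inj] by (simp add: comp_def)
  also have "\<dots> = (\<Sum>K\<in>Pow F. a * (a ^ card K * b ^ (card F - card K)))"
    by (rule sum.cong) (auto simp: insert.hyps fK xK)
  finally show ?case using insert.IH
    by (simp add: insert.hyps sum_distrib_left[symmetric] distrib_right)
qed

lemma binom_interval:
  fixes a b :: rat
  assumes N: "finite N" and I: "I \<subseteq> N"
  shows "(\<Sum>J\<in>{J. J \<subseteq> N \<and> I \<subseteq> J}. a ^ (card J - card I) * b ^ (card N - card J))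
         = (a + b) ^ (card N - card I)"
proof -
  have fI: "finite I" using N I finite_subset by blast
  have img: "{J. J \<subseteq> N \<and> I \<subseteq> J} = (\<lambda>K. I \<union> K) ` Pow (N - I)"
  proof
    show "{J. J \<subseteq> N \<and> I \<subseteq> J} \<subseteq> (\<lambda>K. I \<union> K) ` Pow (N - I)"
    proof
      fix J assume "J \<in> {J. J \<subseteq> N \<and> I \<subseteq> J}"
      then have "J = I \<union> (J - I)" "J - I \<in> Pow (N - I)" by auto
      then show "J \<in> (\<lambda>K. I \<union> K) ` Pow (N - I)" by blast
    qed
  qed (use I in auto)
  have inj: "inj_on (\<lambda>K. I \<union> K) (Pow (N - I))"
    by (auto simp: inj_on_def)
  have cd: "\<And>K. K \<in> Pow (N - I) \<Longrightarrow> card (I \<union> K) = card I + card K"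
    by (rule card_Un_disjoint) (use fI N finite_subset in auto)
  have cN: "card (N - I) = card N - card I" using card_Diff_subset[OF fI I] .
  have "(\<Sum>J\<in>{J. J \<subseteq> N \<and> I \<subseteq> J}. a ^ (card J - card I) * b ^ (card N - card J))
     = (\<Sum>K\<in>Pow (N - I). a ^ (card (I \<union> K) - card I) * b ^ (card N - card (I \<union> K)))"
    unfolding img by (rule sum.reindex[OF inj, unfolded comp_def])
  also have "\<dots> = (\<Sum>K\<in>Pow (N - I). a ^ card K * b ^ (card (N - I) - card K))"
    by (rule sum.cong) (auto simp: cd cN)
  also have "\<dots> = (a + b) ^ card (N - I)" by (rule binom_Pow) (use N in auto)
  finally show ?thesis using cN by simp
qed




definition occ :: "nat list \<Rightarrow> nat list \<Rightarrow> nat set set" where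
  "occ w v = {I. I \<subseteq> {0..<length w} \<and> card I = length v \<and> order_iso (nths w I) v}"

lemma pcount_occ: "pcount w v = card (occ w v)" by (simp add: pcount_def occ_def)

lemma finite_occ: "finite (occ w v)"
  by (rule finite_subset[of _ "Pow {0..<length w}"]) (auto simp: occ_def)

lemma length_nths_sub: "I \<subseteq> {0..<length w} \<Longrightarrow> length (nths w I) = card I"
proof -
  assume "I \<subseteq> {0..<length w}"
  then have "{i. i < length w \<and> i \<in> I} = I" by auto
  then show ?thesis by (simp add: length_nths)
qed

lemma pcount_self: assumes "is_perm x" shows "pcount x x = 1"
proof -
  have "occ x x = {{0..<length x}}"
  proof
    show "occ x x \<subseteq> {{0..<length x}}"
    proof
      fix I assume "I \<in> occ x x"
      then have "I \<subseteq> {0..<length x}" "card I = card {0..<length x}" by (auto simp: occ_def)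
      then show "I \<in> {{0..<length x}}" using card_subset_eq by blast
    qed
    show "{{0..<length x}} \<subseteq> occ x x"
      by (auto simp: occ_def nths_all order_iso_refl)
  qed
  thus ?thesis by (simp add: pcount_occ)
qed

lemma pcount_pos_len: "0 < pcount w v \<Longrightarrow> length v \<le> length w"
proof -
  assume "0 < pcount w v"
  then obtain I where "I \<in> occ w v" unfolding pcount_occ by (metis card.empty ex_in_conv less_irrefl)
  then have "I \<subseteq> {0..<length w}" "card I = length v" by (auto simp: occ_def)
  then show ?thesis by (metis card_atLeastLessThan card_mono diff_zero finite_atLeastLessThan)
qed

lemma pcount_eq_len:
  assumes v: "is_perm v" and w: "is_perm w" and p: "0 < pcount w v" and l: "length v = length w"
  shows "v = w"
proof -
  obtain I where "I \<in> occ w v" using p unfolding pcount_occ by (metis card.empty ex_in_conv less_irrefl)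
  then have I: "I \<subseteq> {0..<length w}" "card I = card {0..<length w}" "order_iso (nths w I) v"
    using l by (auto simp: occ_def)
  then have "I = {0..<length w}" using card_subset_eq by blast
  then have "order_iso w v" using I(3) by (simp add: nths_all)
  then show ?thesis using perm_iso_eq[OF w v] by simp
qed

lemma perm_le_refl: "is_perm x \<Longrightarrow> perm_le x x"
  by (simp add: perm_le_def pcount_self)

lemma perm_le_len: "perm_le x y \<Longrightarrow> length x \<le> length y"
  by (simp add: perm_le_def pcount_pos_len)

lemma pcount_iso: assumes "order_iso u u'" shows "pcount u v = pcount u' v"
proof -
  have l: "length u = length u'" using assms by (simp add: order_iso_def)
  have "\<And>I. order_iso (nths u I) v \<longleftrightarrow> order_iso (nths u' I) v"
    using order_iso_nths[OF assms] order_iso_sym order_iso_trans by metis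
  then show ?thesis unfolding pcount_def l by simp
qed

definition rk :: "nat set \<Rightarrow> nat \<Rightarrow> nat" where
  "rk J i = card {i' \<in> J. i' < i}"

lemma rk_strict:
  assumes "finite J" "x \<in> J" "y \<in> J" "x < y"
  shows "rk J x < rk J y"
  unfolding rk_def
proof (rule psubset_card_mono)
  show "finite {z \<in> J. z < y}" using assms by auto
  have "x \<in> {z \<in> J. z < y}" "x \<notin> {z \<in> J. z < x}" using assms by auto
  then show "{z \<in> J. z < x} \<subset> {z \<in> J. z < y}"
    apply (intro psubsetI)
    using assms apply auto[1]
    by blast
qed

lemma rk_inj: assumes "finite J" shows "inj_on (rk J) J"
proof (rule inj_onI)
  fix x y assume xy: "x \<in> J" "y \<in> J" "rk J x = rk J y"
  show "x = y"
  proof (rule ccontr)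
    assume "x \<noteq> y"
    then consider "x < y" | "y < x" by linarith
    then show False using rk_strict[OF assms, of x y] rk_strict[OF assms, of y x] xy by cases auto
  qed
qed

lemma rk_image: assumes "finite J" shows "rk J ` J = {0..<card J}"
proof -
  have sub: "rk J ` J \<subseteq> {0..<card J}"
  proof
    fix v assume "v \<in> rk J ` J"
    then obtain x where x: "x \<in> J" "v = rk J x" by auto
    have "{i' \<in> J. i' < x} \<subset> J" using x by auto
    then have "v < card J" unfolding x(2) rk_def using assms by (simp add: psubset_card_mono)
    then show "v \<in> {0..<card J}" by simp
  qed
  have "card (rk J ` J) = card {0..<card J}" using card_image[OF rk_inj[OF assms]] by simp
  then show ?thesis using card_subset_eq[OF _ sub] by simp
qed

lemma nths_rk:
  assumes "finite J" "I \<subseteq> J"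
  shows "nths (nths w J) (rk J ` I) = nths w I"
proof -
  have "{i \<in> J. \<exists>j \<in> rk J ` I. card {i' \<in> J. i' < i} = j} = I"
  proof
    show "{i \<in> J. \<exists>j \<in> rk J ` I. card {i' \<in> J. i' < i} = j} \<subseteq> I"
      using rk_inj[OF assms(1)] assms(2) unfolding rk_def inj_on_def by blast
  qed (use assms(2) rk_def in auto)
  then show ?thesis by (simp add: nths_nths)
qed

lemma pcount_nths:
  assumes J: "J \<subseteq> {0..<length w}"
  shows "pcount (nths w J) v = card {I. I \<subseteq> J \<and> card I = length v \<and> order_iso (nths w I) v}"
proof -
  have fJ: "finite J" using J finite_subset by blast
  let ?S = "{I. I \<subseteq> J \<and> card I = length v \<and> order_iso (nths w I) v}"
  have len: "length (nths w J) = card J" using length_nths_sub[OF J] .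
  have eq: "occ (nths w J) v = image (rk J) ` ?S"
  proof
    show "image (rk J) ` ?S \<subseteq> occ (nths w J) v"
    proof
      fix I' assume "I' \<in> image (rk J) ` ?S"
      then obtain I where I: "I \<in> ?S" "I' = rk J ` I" by blast
      have "rk J ` I \<subseteq> {0..<card J}" using I(1) rk_image[OF fJ] by auto
      moreover have "card (rk J ` I) = card I"
        using I(1) by (intro card_image inj_on_subset[OF rk_inj[OF fJ]]) auto
      ultimately show "I' \<in> occ (nths w J) v" using I nths_rk[OF fJ, of I w]
        by (auto simp: occ_def len)
    qed
    show "occ (nths w J) v \<subseteq> image (rk J) ` ?S"
    proof
      fix I' assume I': "I' \<in> occ (nths w J) v"
      define I where "I = {i \<in> J. rk J i \<in> I'}"
      have sub: "I' \<subseteq> rk J ` J" using I' rk_image[OF fJ] by (auto simp: occ_def len)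
      have im: "rk J ` I = I'" unfolding I_def using sub by auto
      have IJ: "I \<subseteq> J" by (auto simp: I_def)
      have "card I = card I'"
        using im[symmetric] IJ by (metis card_image inj_on_subset rk_inj[OF fJ])
      then have "I \<in> ?S" using I' IJ nths_rk[OF fJ IJ, of w] im by (auto simp: occ_def)
      then show "I' \<in> image (rk J) ` ?S" using im by blast
    qed
  qed
  have inj: "inj_on (image (rk J)) ?S"
    by (rule inj_on_subset[OF inj_on_image_Pow[OF rk_inj[OF fJ]]]) auto
  show ?thesis unfolding pcount_occ eq by (rule card_image[OF inj])
qed




lemma main_count:
  fixes a b :: rat
  assumes v: "is_perm v" and w: "is_perm w"
  defines "T \<equiv> {z. is_perm z \<and> length z \<le> length w}"
  shows "(\<Sum>z\<in>T. (a ^ (length z - length v) * b ^ (length w - length z) * of_nat (pcount z v))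
                   * of_nat (pcount w z))
         = (a + b) ^ (length w - length v) * of_nat (pcount w v)"
proof -
  let ?n = "length w" and ?m = "length v"
  let ?N = "{0..<length w}"
  let ?f = "\<lambda>z. a ^ (length z - length v) * b ^ (length w - length z) * of_nat (pcount z v)"
  let ?g = "\<lambda>J. a ^ (card J - ?m) * b ^ (?n - card J)"
  let ?Occ = "occ w v"
  have dw: "distinct w" using w by (simp add: is_perm_def)
  have finT: "finite T"
  proof (rule finite_subset[OF _ finite_lists_length_le[OF finite_atLeastAtMost[of 1 ?n], of ?n]])
    show "T \<subseteq> {xs. set xs \<subseteq> {1..?n} \<and> length xs \<le> ?n}"
      by (auto simp: T_def is_perm_def)
  qed
  have "(\<Sum>z\<in>T. ?f z * of_nat (pcount w z)) = (\<Sum>z\<in>T. \<Sum>J\<in>occ w z. ?f z)"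
    by (simp add: pcount_occ mult.commute)
  also have "\<dots> = (\<Sum>p\<in>Sigma T (occ w). ?f (fst p))"
    by (subst sum.Sigma) (auto simp: finT finite_occ split_def)
  also have "Sigma T (occ w) = (\<lambda>J. (std (nths w J), J)) ` Pow ?N"
  proof
    show "Sigma T (occ w) \<subseteq> (\<lambda>J. (std (nths w J), J)) ` Pow ?N"
    proof
      fix p assume "p \<in> Sigma T (occ w)"
      then obtain z J where p: "p = (z, J)" "z \<in> T" "J \<in> occ w z" by auto
      then have "J \<subseteq> ?N" "order_iso (nths w J) z" "is_perm z"
        by (auto simp: occ_def T_def)
      then have "z = std (nths w J)" using iso_perm_unique dw by simp
      then show "p \<in> (\<lambda>J. (std (nths w J), J)) ` Pow ?N" using p \<open>J \<subseteq> ?N\<close> by auto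
    qed
    show "(\<lambda>J. (std (nths w J), J)) ` Pow ?N \<subseteq> Sigma T (occ w)"
    proof
      fix p assume "p \<in> (\<lambda>J. (std (nths w J), J)) ` Pow ?N"
      then obtain J where J: "J \<subseteq> ?N" "p = (std (nths w J), J)" by auto
      have l: "length (std (nths w J)) = card J" using length_nths_sub[OF J(1)] by simp
      have "card J \<le> ?n" using J(1) by (metis card_atLeastLessThan card_mono diff_zero finite_atLeastLessThan)
      then have "std (nths w J) \<in> T" using is_perm_std[OF distinct_nthsI[OF dw]] l by (simp add: T_def)
      moreover have "J \<in> occ w (std (nths w J))" using J(1) l order_iso_std by (simp add: occ_def)
      ultimately show "p \<in> Sigma T (occ w)" using J(2) by auto
    qed
  qed
  also have "(\<Sum>p\<in>(\<lambda>J. (std (nths w J), J)) ` Pow ?N. ?f (fst p)) = (\<Sum>J\<in>Pow ?N. ?f (std (nths w J)))"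
    by (subst sum.reindex) (auto simp: inj_on_def)
  also have "\<dots> = (\<Sum>J\<in>Pow ?N. ?g J * of_nat (card {I \<in> ?Occ. I \<subseteq> J}))"
  proof (rule sum.cong)
    fix J assume "J \<in> Pow ?N"
    then have J: "J \<subseteq> ?N" by simp
    have l: "length (std (nths w J)) = card J" using length_nths_sub[OF J] by simp
    have "pcount (std (nths w J)) v = pcount (nths w J) v"
      using pcount_iso[OF order_iso_sym[OF order_iso_std]] by simp
    also have "\<dots> = card {I. I \<subseteq> J \<and> card I = length v \<and> order_iso (nths w I) v}"
      by (rule pcount_nths[OF J])
    also have "{I. I \<subseteq> J \<and> card I = length v \<and> order_iso (nths w I) v} = {I \<in> ?Occ. I \<subseteq> J}"
      using J by (auto simp: occ_def)
    finally show "?f (std (nths w J)) = ?g J * of_nat (card {I \<in> ?Occ. I \<subseteq> J})"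
      using l by simp
  qed simp
  also have "\<dots> = (\<Sum>J\<in>Pow ?N. \<Sum>I\<in>{I. I \<in> ?Occ \<and> I \<subseteq> J}. ?g J)"
    by (simp add: mult.commute)
  also have "\<dots> = (\<Sum>I\<in>?Occ. \<Sum>J\<in>{J. J \<in> Pow ?N \<and> I \<subseteq> J}. ?g J)"
    by (rule sum.swap_restrict) (auto simp: finite_occ)
  also have "\<dots> = (\<Sum>I\<in>?Occ. (a + b) ^ (?n - ?m))"
  proof (rule sum.cong)
    fix I assume "I \<in> ?Occ"
    then have I: "I \<subseteq> ?N" "card I = ?m" by (auto simp: occ_def)
    have "(\<Sum>J\<in>{J. J \<in> Pow ?N \<and> I \<subseteq> J}. ?g J)
        = (\<Sum>J\<in>{J. J \<subseteq> ?N \<and> I \<subseteq> J}. a ^ (card J - card I) * b ^ (card ?N - card J))"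
      using I by simp
    also have "\<dots> = (a + b) ^ (card ?N - card I)" by (rule binom_interval[OF _ I(1)]) simp
    finally show "(\<Sum>J\<in>{J. J \<in> Pow ?N \<and> I \<subseteq> J}. ?g J) = (a + b) ^ (?n - ?m)" using I by simp
  qed simp
  also have "\<dots> = (a + b) ^ (?n - ?m) * of_nat (pcount w v)"
    by (simp add: pcount_occ mult.commute)
  finally show ?thesis .
qed




lemma finite_T: "finite {z. is_perm z \<and> length z \<le> n}"
proof (rule finite_subset[OF _ finite_lists_length_le[OF finite_atLeastAtMost[of 1 n], of n]])
  show "{z. is_perm z \<and> length z \<le> n} \<subseteq> {xs. set xs \<subseteq> {1..n} \<and> length xs \<le> n}"
    by (auto simp: is_perm_def)
qed

definition Q :: "rat \<Rightarrow> nat list \<Rightarrow> nat list \<Rightarrow> rat" where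
  "Q a v w = a ^ (length w - length v) * Pmat v w"

lemma Pmat_zero: "\<not> perm_le v w \<Longrightarrow> Pmat v w = 0"
  by (auto simp: Pmat_def perm_le_def)

lemma conv_Q: "conv (Q a) (Q b) v w = Q (a + b) v w"
proof (cases "is_perm v \<and> is_perm w")
  case False
  have e: "{z. perm_le v z \<and> perm_le z w} = {}" using False by (auto simp: perm_le_def)
  have "conv (Q a) (Q b) v w = 0" unfolding conv_def e by simp
  moreover have "Q (a + b) v w = 0" using False by (auto simp: Q_def Pmat_def)
  ultimately show ?thesis by simp
next
  case True
  then have v: "is_perm v" and w: "is_perm w" by auto
  let ?T = "{z. is_perm z \<and> length z \<le> length w}"
  let ?S = "{z. perm_le v z \<and> perm_le z w}"
  have ST: "?S \<subseteq> ?T" by (auto simp: perm_le_def dest: pcount_pos_len)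
  have "conv (Q a) (Q b) v w = (\<Sum>z\<in>?S. Q a v z * Q b z w)" by (simp add: conv_def)
  also have "\<dots> = (\<Sum>z\<in>?T. Q a v z * Q b z w)"
  proof (rule sum.mono_neutral_left[OF finite_T ST], rule ballI)
    fix z assume "z \<in> ?T - ?S"
    then have "\<not> perm_le v z \<or> \<not> perm_le z w" by auto
    then show "Q a v z * Q b z w = 0" using Pmat_zero by (auto simp: Q_def)
  qed
  also have "\<dots> = (\<Sum>z\<in>?T. (a ^ (length z - length v) * b ^ (length w - length z) * of_nat (pcount z v))
                   * of_nat (pcount w z))"
    by (rule sum.cong) (auto simp: Q_def Pmat_def v w)
  also have "\<dots> = (a + b) ^ (length w - length v) * of_nat (pcount w v)"
    by (rule main_count[OF v w])
  finally show ?thesis by (simp add: Q_def Pmat_def v w)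
qed

lemma conv_Q': "conv (Q a) (Q b) = Q (a + b)"
  by (intro ext) (rule conv_Q)

lemma Q1: "Q 1 = Pmat" by (intro ext) (simp add: Q_def)

lemma Q0: "Q 0 = delta"
proof (intro ext)
  fix v w
  show "Q 0 v w = delta v w"
  proof (cases "is_perm v \<and> is_perm w")
    case False then show ?thesis by (auto simp: Q_def Pmat_def delta_def)
  next
    case True
    then have v: "is_perm v" and w: "is_perm w" by auto
    show ?thesis
    proof (cases "v = w")
      case True then show ?thesis using v by (simp add: Q_def Pmat_def delta_def pcount_self)
    next
      case False
      show ?thesis
      proof (cases "pcount w v = 0")
        case True then show ?thesis using False by (simp add: Q_def Pmat_def delta_def)
      next
        case c: False
        then have "length v \<le> length w" using pcount_pos_len by simp
        moreover have "length v \<noteq> length w" using pcount_eq_len[OF v w] c False by auto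
        ultimately have "length w - length v > 0" by simp
        then show ?thesis using False by (simp add: Q_def delta_def)
      qed
    qed
  qed
qed

lemma inc_Q: "incidence_elem (Q a)"
  by (simp add: incidence_elem_def Q_def Pmat_zero)

lemma pow_Q: "conv_pow Pmat n = Q (of_nat n)"
proof (induction n)
  case 0 then show ?case by (simp add: Q0)
next
  case (Suc n)
  then show ?case by (simp add: Q1[symmetric] conv_Q' add.commute)
qed

lemma inv_unique:
  assumes i1: "incidence_elem G1" and i2: "incidence_elem G2"
    and c1: "conv Pmat G1 = delta" and c2: "conv Pmat G2 = delta"
  shows "G1 = G2"
proof -
  have "\<forall>(x::nat list) (y::nat list). length y - length x = k \<longrightarrow> G1 x y = G2 x y" for k
  proof (induction k rule: less_induct)
    case (less k)
    show ?case
    proof (intro allI impI)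
      fix x y :: "nat list" assume k: "length y - length x = k"
      show "G1 x y = G2 x y"
      proof (cases "perm_le x y")
        case False then show ?thesis using i1 i2 by (simp add: incidence_elem_def)
      next
        case True
        then have x: "is_perm x" and y: "is_perm y" by (auto simp: perm_le_def)
        let ?S = "{z. perm_le x z \<and> perm_le z y}"
        have finS: "finite ?S"
          by (rule finite_subset[OF _ finite_T[of "length y"]]) (auto simp: perm_le_def dest: pcount_pos_len)
        have xS: "x \<in> ?S" using True perm_le_refl[OF x] by simp
        have eq: "(\<Sum>z\<in>?S - {x}. Pmat x z * G1 z y) = (\<Sum>z\<in>?S - {x}. Pmat x z * G2 z y)"
        proof (rule sum.cong)
          fix z assume z: "z \<in> ?S - {x}"
          then have "length x \<le> length z" "length z \<le> length y" "z \<noteq> x" "perm_le x z"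
            by (auto dest: perm_le_len)
          moreover have "length x \<noteq> length z"
            using pcount_eq_len[of x z] \<open>perm_le x z\<close> \<open>z \<noteq> x\<close> by (auto simp: perm_le_def)
          ultimately have "length y - length z < k" using k by linarith
          then show "Pmat x z * G1 z y = Pmat x z * G2 z y" using less by simp
        qed simp
        have Px: "Pmat x x = 1" using x by (simp add: Pmat_def pcount_self)
        have "delta x y = conv Pmat G1 x y" using c1 by simp
        also have "\<dots> = G1 x y + (\<Sum>z\<in>?S - {x}. Pmat x z * G1 z y)"
          unfolding conv_def sum.remove[OF finS xS] Px by simp
        finally have e1: "delta x y = G1 x y + (\<Sum>z\<in>?S - {x}. Pmat x z * G1 z y)" .
        have "delta x y = conv Pmat G2 x y" using c2 by simp
        also have "\<dots> = G2 x y + (\<Sum>z\<in>?S - {x}. Pmat x z * G2 z y)"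
          unfolding conv_def sum.remove[OF finS xS] Px by simp
        finally have e2: "delta x y = G2 x y + (\<Sum>z\<in>?S - {x}. Pmat x z * G2 z y)" .
        show ?thesis using e1 e2 eq by simp
      qed
    qed
  qed
  then show ?thesis by (intro ext) blast
qed

lemma inv_Q: "conv_inv Pmat = Q (-1)"
  unfolding conv_inv_def
proof (rule the_equality)
  show "incidence_elem (Q (-1)) \<and> conv Pmat (Q (-1)) = delta \<and> conv (Q (-1)) Pmat = delta"
    by (simp add: inc_Q Q1[symmetric] conv_Q' Q0)
  fix G assume "incidence_elem G \<and> conv Pmat G = delta \<and> conv G Pmat = delta"
  then show "G = Q (-1)"
    using inv_unique[of G "Q (-1)"] inc_Q by (simp add: Q1[symmetric] conv_Q' Q0)
qed

lemma ipow_Q: "conv_pow (Q (-1)) n = Q (- of_nat n)"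
proof (induction n)
  case 0 then show ?case by (simp add: Q0)
next
  case (Suc n)
  then show ?case by (simp add: conv_Q' add.commute)
qed

theorem mainTheorem6:
  fixes v w :: "nat list" and d :: int
  assumes "is_perm v" and "is_perm w"
  shows "conv_ipow Pmat d v w
           = (of_int d) ^ (length w - length v) * Pmat v w"
proof -
  have "conv_ipow Pmat d = Q (of_int d)"
  proof (cases "0 \<le> d")
    case True then show ?thesis by (simp add: conv_ipow_def pow_Q)
  next
    case False
    then have "- of_nat (nat (- d)) = (of_int d :: rat)" by simp
    then show ?thesis using False by (simp add: conv_ipow_def inv_Q ipow_Q)
  qed
  then show ?thesis by (simp add: Q_def)
qed


end
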